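(* Let $\alpha>-1$ and $W(x,y)=\dfrac{x^{\alpha}y^{\alpha+1}e^{-x-y}}{x+y}$ on $(0,\infty)^2$. Let $\{p_k\}$, $\{q_k\}$ be the monic Cauchy–Laguerre biorthogonal polynomials ($\deg p_k=\deg q_k=k$, monic, $\int_0^\infty\!\int_0^\infty p_k(x)q_l(y)W(x,y)\,dx\,dy=h_k\delta_{kl}$). Write $p_k(x)=\sum_{i=0}^k a_{k,i}x^i$ and $q_k(y)=\sum_{i=0}^k\hat a_{k,i}y^i$ with $a_{k,k}=\hat a_{k,k}=1$. Define $b_{\beta,0}=\hat b_{\beta,0}=1$ and, for $1\le i\le\beta$, $b_{\beta,i}=-\sum_{j=0}^{i-1}b_{\beta,j}a_{\beta-j,\beta-i}$ and $\hat b_{\beta,i}=-\sum_{j=0}^{i-1}\hat b_{\beta,j}\hat a_{\beta-j,\beta-i}$, with the convention $b_{\beta,i}=\hat b_{\beta,i}=0$ for $i<0$. Then for all $\beta,k,j\in\mathbb{N}$, $$\frac{1}{h_j}\int_0^\infty\!\!\int_0^\infty x^{\beta}p_k(x)q_j(y)W(x,y)\,dx\,dy=\sum_{\ell=0}^{k}a_{k,\ell}\,b_{\beta+\ell,\beta+\ell-j},$$ $$\frac{1}{h_j}\int_0^\infty\!\!\int_0^\infty y^{\beta}p_j(x)q_k(y)W(x,y)\,dx\,dy=\sum_{\ell=0}^{k}\hat a_{k,\ell}\,\hat b_{\beta+\ell,\beta+\ell-j}.$$ *)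

theory Defs
  imports "HOL-Analysis.Analysis" "HOL-Computational_Algebra.Polynomial"
begin

definition CL_weight :: "real \<Rightarrow> real \<Rightarrow> real \<Rightarrow> real" where
  "CL_weight \<alpha> x y = x powr \<alpha> * y powr (\<alpha> + 1) * exp (- x - y) / (x + y)"

definition CL_int :: "real \<Rightarrow> (real \<Rightarrow> real \<Rightarrow> real) \<Rightarrow> real" where
  "CL_int \<alpha> f = (LINT z : {0<..} \<times> {0<..} | lborel. f (fst z) (snd z) * CL_weight \<alpha> (fst z) (snd z))"

definition CL_h :: "real \<Rightarrow> (nat \<Rightarrow> real poly) \<Rightarrow> (nat \<Rightarrow> real poly) \<Rightarrow> nat \<Rightarrow> real" where
  "CL_h \<alpha> p q k = CL_int \<alpha> (\<lambda>x y. poly (p k) x * poly (q k) y)"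

definition CL_biorthogonal :: "real \<Rightarrow> (nat \<Rightarrow> real poly) \<Rightarrow> (nat \<Rightarrow> real poly) \<Rightarrow> bool" where
  "CL_biorthogonal \<alpha> p q \<longleftrightarrow>
     (\<forall>k. degree (p k) = k \<and> lead_coeff (p k) = 1 \<and> degree (q k) = k \<and> lead_coeff (q k) = 1) \<and>
     (\<forall>k l. k \<noteq> l \<longrightarrow> CL_int \<alpha> (\<lambda>x y. poly (p k) x * poly (q l) y) = 0) \<and>
     (\<forall>k. CL_h \<alpha> p q k \<noteq> 0)"

fun bnat :: "(nat \<Rightarrow> real poly) \<Rightarrow> nat \<Rightarrow> nat \<Rightarrow> real" where
  "bnat p \<beta> i = (if i = 0 then 1
       else - (\<Sum>j<i. bnat p \<beta> j * coeff (p (\<beta> - j)) (\<beta> - i)))"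

definition bcoef :: "(nat \<Rightarrow> real poly) \<Rightarrow> nat \<Rightarrow> int \<Rightarrow> real" where
  "bcoef p \<beta> i = (if i < 0 then 0 else bnat p \<beta> (nat i))"

end

theory Submission
  imports Defs
begin

lemma gamma1:
  fixes c :: real assumes "c > -1"
  shows "integrable lborel (\<lambda>t::real. indicator {0..} t * t powr c / exp t)"
proof -
  have "Gamma (c+1) = (\<integral>\<^sup>+t. ennreal (indicator {0..} t * t powr (c + 1 - 1) / exp t) \<partial>lborel)"
    using Gamma_conv_nn_integral_real[of "c+1"] assms by simp
  hence "(\<integral>\<^sup>+t. ennreal (norm (indicator {0..} t * t powr c / exp t)) \<partial>lborel) < \<infinity>"
    by (simp add: abs_mult) (metis ennreal_less_top)
  thus ?thesis by (subst integrable_iff_bounded) auto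
qed

lemma prodint:
  fixes c d :: real assumes "c > -1" "d > -1"
  shows "integrable lborel (\<lambda>z::real\<times>real. (indicator {0..} (fst z) * fst z powr c / exp (fst z)) * (indicator {0..} (snd z) * snd z powr d / exp (snd z)))"
proof -
  define g where "g = (\<lambda>t::real. indicator {0..} t * t powr c / exp t)"
  define h where "h = (\<lambda>t::real. indicator {0..} t * t powr d / exp t)"
  have g: "integrable lborel g" unfolding g_def using gamma1 assms by auto
  have h: "integrable lborel h" unfolding h_def using gamma1 assms by auto
  have gm[measurable]: "g \<in> borel_measurable lborel" using g by auto
  have hm[measurable]: "h \<in> borel_measurable lborel" using h by auto
  have "integrable (lborel \<Otimes>\<^sub>M lborel) (\<lambda>z::real\<times>real. g (fst z) * h (snd z))"
  proof (rule lborel_pair.Fubini_integrable)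
    show "(\<lambda>z::real\<times>real. g (fst z) * h (snd z)) \<in> borel_measurable (lborel \<Otimes>\<^sub>M lborel)"
      by measurable
    have "(\<lambda>x. \<integral>y. norm (g (fst (x, y)) * h (snd (x, y))) \<partial>lborel) = (\<lambda>x. \<bar>g x\<bar> * (\<integral>y. \<bar>h y\<bar> \<partial>lborel))"
      by (simp add: abs_mult)
    moreover have "integrable lborel (\<lambda>x. \<bar>g x\<bar> * (\<integral>y. \<bar>h y\<bar> \<partial>lborel))"
      using g by (intro integrable_mult_left) auto
    ultimately show "integrable lborel (\<lambda>x. \<integral>y. norm (g (fst (x, y)) * h (snd (x, y))) \<partial>lborel)" by simp
    show "AE x in lborel. integrable lborel (\<lambda>y. g (fst (x, y)) * h (snd (x, y)))"
      using h by (auto intro!: integrable_mult_right)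
  qed
  thus ?thesis unfolding g_def h_def lborel_prod .
qed



lemma pt_bound:
  fixes x y :: real and a b :: nat assumes "x > 0" "y > 0"
  shows "\<bar>x ^ a * y ^ b * CL_weight \<alpha> x y\<bar> \<le> x powr (real a + \<alpha>) / exp x * (y powr (real b + \<alpha>) / exp y)"
proof -
  have e1: "x ^ a * x powr \<alpha> = x powr (real a + \<alpha>)" using assms by (simp add: powr_add powr_realpow)
  have e2: "y ^ b * y powr (\<alpha> + 1) = y powr (real b + \<alpha>) * y" using assms by (simp add: powr_add powr_realpow)
  have e3: "exp (- x - y) = 1 / (exp x * exp y)" by (simp add: exp_diff exp_minus field_simps)
  have "x ^ a * y ^ b * CL_weight \<alpha> x y = (x ^ a * x powr \<alpha>) * (y ^ b * y powr (\<alpha> + 1)) * exp (- x - y) / (x + y)"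
    unfolding CL_weight_def by (simp add: algebra_simps)
  also have "\<dots> = (x powr (real a + \<alpha>) / exp x * (y powr (real b + \<alpha>) / exp y)) * (y / (x + y))"
    unfolding e1 e2 e3 by (simp add: field_simps)
  finally have eq: "x ^ a * y ^ b * CL_weight \<alpha> x y = (x powr (real a + \<alpha>) / exp x * (y powr (real b + \<alpha>) / exp y)) * (y / (x + y))" .
  have nn: "0 \<le> x powr (real a + \<alpha>) / exp x * (y powr (real b + \<alpha>) / exp y)" by simp
  have le: "y / (x + y) \<le> 1" "0 \<le> y / (x+y)" using assms by auto
  have "\<bar>(x powr (real a + \<alpha>) / exp x * (y powr (real b + \<alpha>) / exp y)) * (y / (x + y))\<bar>
     = (x powr (real a + \<alpha>) / exp x * (y powr (real b + \<alpha>) / exp y)) * (y / (x + y))"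
    using nn le by (intro abs_of_nonneg mult_nonneg_nonneg) auto
  then show ?thesis unfolding eq using nn le mult_left_le by metis
qed

definition CLI :: "real \<Rightarrow> (real \<Rightarrow> real \<Rightarrow> real) \<Rightarrow> bool" where
  "CLI \<alpha> f \<longleftrightarrow> set_integrable lborel ({0<..} \<times> {0<..}) (\<lambda>z. f (fst z) (snd z) * CL_weight \<alpha> (fst z) (snd z))"

lemma CLI_monom:
  assumes "\<alpha> > -1"
  shows "CLI \<alpha> (\<lambda>x y. x ^ a * y ^ b)"
  unfolding CLI_def set_integrable_def
proof (rule Bochner_Integration.integrable_bound)
  show "integrable lborel (\<lambda>z::real\<times>real. indicator {0..} (fst z) * fst z powr (real a + \<alpha>) / exp (fst z) * (indicator {0..} (snd z) * snd z powr (real b + \<alpha>) / exp (snd z)))"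
    using assms by (intro prodint) auto
  show "(\<lambda>z::real\<times>real. indicator ({0<..} \<times> {0<..}) z *\<^sub>R (fst z ^ a * snd z ^ b * CL_weight \<alpha> (fst z) (snd z))) \<in> borel_measurable lborel"
    unfolding CL_weight_def lborel_prod[symmetric] by measurable
  show "AE z in lborel. norm (indicator ({0<..} \<times> {0<..}) z *\<^sub>R (fst z ^ a * snd z ^ b * CL_weight \<alpha> (fst z) (snd z)))
     \<le> norm (indicator {0..} (fst z) * fst z powr (real a + \<alpha>) / exp (fst z) * (indicator {0..} (snd z) * snd z powr (real b + \<alpha>) / exp (snd z)))"
  proof (rule AE_I2)
    fix z :: "real \<times> real"
    show "norm (indicator ({0<..} \<times> {0<..}) z *\<^sub>R (fst z ^ a * snd z ^ b * CL_weight \<alpha> (fst z) (snd z)))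
     \<le> norm (indicator {0..} (fst z) * fst z powr (real a + \<alpha>) / exp (fst z) * (indicator {0..} (snd z) * snd z powr (real b + \<alpha>) / exp (snd z)))"
    proof (cases "z \<in> {0<..} \<times> {0<..}")
      case True
      then obtain x y where z: "z = (x,y)" "x > 0" "y > 0" by auto
      show ?thesis using pt_bound[OF z(2,3), of a b \<alpha>] z by (simp add: indicator_def)
    next
      case False
      then show ?thesis by simp
    qed
  qed
qed



lemma CLI_sum:
  assumes "finite I" "\<And>i. i \<in> I \<Longrightarrow> CLI \<alpha> (f i)"
  shows "CLI \<alpha> (\<lambda>x y. \<Sum>i\<in>I. c i * f i x y)"
proof -
  have eq: "(\<lambda>z::real\<times>real. indicator ({0<..} \<times> {0<..}) z *\<^sub>R ((\<Sum>i\<in>I. c i * f i (fst z) (snd z)) * CL_weight \<alpha> (fst z) (snd z)))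
    = (\<lambda>z. \<Sum>i\<in>I. c i * (indicator ({0<..} \<times> {0<..}) z *\<^sub>R (f i (fst z) (snd z) * CL_weight \<alpha> (fst z) (snd z))))"
    by (simp add: sum_distrib_left sum_distrib_right algebra_simps)
  show ?thesis using assms unfolding CLI_def set_integrable_def eq
    by (intro Bochner_Integration.integrable_sum Bochner_Integration.integrable_mult_right) auto
qed

lemma CL_int_sum:
  assumes "finite I" "\<And>i. i \<in> I \<Longrightarrow> CLI \<alpha> (f i)"
  shows "CL_int \<alpha> (\<lambda>x y. \<Sum>i\<in>I. c i * f i x y) = (\<Sum>i\<in>I. c i * CL_int \<alpha> (f i))"
proof -
  have eq: "(\<lambda>z::real\<times>real. indicator ({0<..} \<times> {0<..}) z *\<^sub>R ((\<Sum>i\<in>I. c i * f i (fst z) (snd z)) * CL_weight \<alpha> (fst z) (snd z)))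
    = (\<lambda>z. \<Sum>i\<in>I. c i * (indicator ({0<..} \<times> {0<..}) z *\<^sub>R (f i (fst z) (snd z) * CL_weight \<alpha> (fst z) (snd z))))"
    by (simp add: sum_distrib_left sum_distrib_right algebra_simps)
  show ?thesis using assms unfolding CL_int_def set_lebesgue_integral_def eq CLI_def set_integrable_def
    by (subst Bochner_Integration.integral_sum) auto
qed

lemma CLI_poly:
  assumes "\<alpha> > -1"
  shows "CLI \<alpha> (\<lambda>x y. poly P x * poly Q y)"
proof -
  have eq: "(\<lambda>x y. poly P x * poly Q y) = (\<lambda>x y. \<Sum>i\<le>degree P. coeff P i * (\<Sum>j\<le>degree Q. coeff Q j * (x ^ i * y ^ j)))"
    unfolding poly_altdef sum_product by (simp add: sum_distrib_left mult_ac)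
  show ?thesis unfolding eq
    by (intro CLI_sum CLI_monom assms) auto
qed

lemma CL_int_left:
  assumes "\<alpha> > -1" "finite I"
  shows "CL_int \<alpha> (\<lambda>x y. poly (\<Sum>i\<in>I. smult (c i) (P i)) x * poly Q y) = (\<Sum>i\<in>I. c i * CL_int \<alpha> (\<lambda>x y. poly (P i) x * poly Q y))"
proof -
  have eq: "(\<lambda>x y. poly (\<Sum>i\<in>I. smult (c i) (P i)) x * poly Q y) = (\<lambda>x y. \<Sum>i\<in>I. c i * (poly (P i) x * poly Q y))"
    by (simp add: poly_sum sum_distrib_right sum_distrib_left mult_ac)
  show ?thesis unfolding eq by (rule CL_int_sum) (use assms CLI_poly in auto)
qed

lemma CL_int_right:
  assumes "\<alpha> > -1" "finite I"
  shows "CL_int \<alpha> (\<lambda>x y. poly P x * poly (\<Sum>i\<in>I. smult (c i) (Q i)) y) = (\<Sum>i\<in>I. c i * CL_int \<alpha> (\<lambda>x y. poly P x * poly (Q i) y))"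
proof -
  have eq: "(\<lambda>x y. poly P x * poly (\<Sum>i\<in>I. smult (c i) (Q i)) y) = (\<lambda>x y. \<Sum>i\<in>I. c i * (poly P x * poly (Q i) y))"
    by (simp add: poly_sum sum_distrib_right sum_distrib_left mult_ac)
  show ?thesis unfolding eq by (rule CL_int_sum) (use assms CLI_poly in auto)
qed

declare bnat.simps[simp del]

lemma monom_expand:
  assumes "\<And>k. degree (p k) = k" "\<And>k. lead_coeff (p k) = 1"
  shows "monom 1 n = (\<Sum>i\<le>n. smult (bnat p n i) (p (n - i)))"
proof (rule poly_eqI)
  fix t
  show "coeff (monom 1 n) t = coeff (\<Sum>i\<le>n. smult (bnat p n i) (p (n - i))) t"
  proof (cases "t \<le> n")
    case False
    have "coeff (p (n - i)) t = 0" for i using False assms(1)[of "n-i"] by (intro coeff_eq_0) auto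
    then show ?thesis using False by (simp add: coeff_sum)
  next
    case True
    define m where "m = n - t"
    have nm: "n - m = t" using True m_def by auto
    have split: "{..n} = {..m} \<union> {m<..n}" using True m_def by auto
    have z: "(\<Sum>i\<in>{m<..n}. bnat p n i * coeff (p (n - i)) t) = 0"
    proof (rule sum.neutral, safe)
      fix i assume "i \<in> {m<..n}"
      hence "degree (p (n - i)) < t" using assms(1)[of "n-i"] True m_def by auto
      thus "bnat p n i * coeff (p (n - i)) t = 0" by (simp add: coeff_eq_0)
    qed
    have ct: "coeff (p t) t = 1" using assms(1)[of t] assms(2)[of t] by simp
    have "coeff (\<Sum>i\<le>n. smult (bnat p n i) (p (n - i))) t = (\<Sum>i\<le>n. bnat p n i * coeff (p (n - i)) t)"
      by (simp add: coeff_sum)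
    also have "\<dots> = (\<Sum>i\<le>m. bnat p n i * coeff (p (n - i)) t)"
      unfolding split by (subst sum.union_disjoint) (auto simp: z)
    also have "\<dots> = (\<Sum>i<m. bnat p n i * coeff (p (n - i)) t) + bnat p n m"
      by (simp add: lessThan_Suc_atMost[symmetric] nm ct)
    also have "\<dots> = (if m = 0 then 1 else 0)"
      by (subst (2) bnat.simps) (simp add: nm)
    also have "\<dots> = coeff (monom 1 n) t" using True m_def by (auto simp: coeff_monom)
    finally show ?thesis by simp
  qed
qed



lemma CLI_xpow: assumes "\<alpha> > -1" shows "CLI \<alpha> (\<lambda>x y. x ^ m * poly Q y)"
proof -
  have "(\<lambda>x y. x ^ m * poly Q y) = (\<lambda>x y. poly (monom 1 m) x * poly Q y)" by (simp add: poly_monom)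
  thus ?thesis using CLI_poly[OF assms] by simp
qed

lemma CLI_ypow: assumes "\<alpha> > -1" shows "CLI \<alpha> (\<lambda>x y. poly P x * y ^ m)"
proof -
  have "(\<lambda>x y. poly P x * y ^ m) = (\<lambda>x y. poly P x * poly (monom 1 m) y)" by (simp add: poly_monom)
  thus ?thesis using CLI_poly[OF assms] by simp
qed

lemma sum_delta_aux:
  fixes b :: "nat \<Rightarrow> real"
  shows "(\<Sum>i\<le>n. b i * (if n - i = j then h else 0)) = (if j \<le> n then b (n - j) * h else 0)"
proof (cases "j \<le> n")
  case True
  have "(\<Sum>i\<le>n. b i * (if n - i = j then h else 0)) = (\<Sum>i\<le>n. if i = n - j then b i * h else 0)"
    using True by (intro sum.cong) auto
  also have "\<dots> = b (n - j) * h" by (subst sum.delta) auto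
  finally show ?thesis using True by simp
next
  case False
  then show ?thesis by (intro trans[OF sum.neutral]) auto
qed

lemma key_left:
  assumes a: "\<alpha> > -1" and b: "CL_biorthogonal \<alpha> p q"
  shows "CL_int \<alpha> (\<lambda>x y. x ^ n * poly (q j) y) = bcoef p n (int n - int j) * CL_h \<alpha> p q j"
proof -
  have dp: "\<And>k. degree (p k) = k" "\<And>k. lead_coeff (p k) = 1" using b unfolding CL_biorthogonal_def by blast+
  have orth: "CL_int \<alpha> (\<lambda>x y. poly (p m) x * poly (q j) y) = (if m = j then CL_h \<alpha> p q j else 0)" for m
    using b unfolding CL_biorthogonal_def CL_h_def by auto
  have "(\<lambda>x y. x ^ n * poly (q j) y) = (\<lambda>x y. poly (\<Sum>i\<le>n. smult (bnat p n i) (p (n - i))) x * poly (q j) y)"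
    by (simp add: monom_expand[OF dp, symmetric] poly_monom)
  hence "CL_int \<alpha> (\<lambda>x y. x ^ n * poly (q j) y) = (\<Sum>i\<le>n. bnat p n i * CL_int \<alpha> (\<lambda>x y. poly (p (n - i)) x * poly (q j) y))"
    using CL_int_left[OF a, of "{..n}"] by simp
  also have "\<dots> = (\<Sum>i\<le>n. bnat p n i * (if n - i = j then CL_h \<alpha> p q j else 0))" by (simp add: orth)
  also have "\<dots> = bcoef p n (int n - int j) * CL_h \<alpha> p q j"
    unfolding sum_delta_aux bcoef_def by (auto simp: nat_diff_distrib)
  finally show ?thesis .
qed

lemma key_right:
  assumes a: "\<alpha> > -1" and b: "CL_biorthogonal \<alpha> p q"
  shows "CL_int \<alpha> (\<lambda>x y. poly (p j) x * y ^ n) = bcoef q n (int n - int j) * CL_h \<alpha> p q j"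
proof -
  have dp: "\<And>k. degree (q k) = k" "\<And>k. lead_coeff (q k) = 1" using b unfolding CL_biorthogonal_def by blast+
  have orth: "CL_int \<alpha> (\<lambda>x y. poly (p j) x * poly (q m) y) = (if m = j then CL_h \<alpha> p q j else 0)" for m
    using b unfolding CL_biorthogonal_def CL_h_def by (cases "m = j") auto
  have "(\<lambda>x y. poly (p j) x * y ^ n) = (\<lambda>x y. poly (p j) x * poly (\<Sum>i\<le>n. smult (bnat q n i) (q (n - i))) y)"
    by (simp add: monom_expand[OF dp, symmetric] poly_monom)
  hence "CL_int \<alpha> (\<lambda>x y. poly (p j) x * y ^ n) = (\<Sum>i\<le>n. bnat q n i * CL_int \<alpha> (\<lambda>x y. poly (p j) x * poly (q (n - i)) y))"
    using CL_int_right[OF a, of "{..n}"] by simp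
  also have "\<dots> = (\<Sum>i\<le>n. bnat q n i * (if n - i = j then CL_h \<alpha> p q j else 0))" by (simp add: orth)
  also have "\<dots> = bcoef q n (int n - int j) * CL_h \<alpha> p q j"
    unfolding sum_delta_aux bcoef_def by (auto simp: nat_diff_distrib)
  finally show ?thesis .
qed

theorem corollary1:
  fixes \<alpha> :: real and p q :: "nat \<Rightarrow> real poly"
  assumes "\<alpha> > -1"
    and "CL_biorthogonal \<alpha> p q"
  shows "\<forall>\<beta> k j.
     CL_int \<alpha> (\<lambda>x y. x ^ \<beta> * poly (p k) x * poly (q j) y) / CL_h \<alpha> p q j
       = (\<Sum>l\<le>k. coeff (p k) l * bcoef p (\<beta> + l) (int (\<beta> + l) - int j))
   \<and> CL_int \<alpha> (\<lambda>x y. y ^ \<beta> * poly (p j) x * poly (q k) y) / CL_h \<alpha> p q j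
       = (\<Sum>l\<le>k. coeff (q k) l * bcoef q (\<beta> + l) (int (\<beta> + l) - int j))"
proof (intro allI conjI)
  fix \<beta> k j
  have dp: "degree (p k) = k" "degree (q k) = k" using assms(2) unfolding CL_biorthogonal_def by auto
  have h: "CL_h \<alpha> p q j \<noteq> 0" using assms(2) unfolding CL_biorthogonal_def by auto
  have e1: "(\<lambda>x y. x ^ \<beta> * poly (p k) x * poly (q j) y) = (\<lambda>x y. \<Sum>l\<le>k. coeff (p k) l * (x ^ (\<beta> + l) * poly (q j) y))"
    by (intro ext) (simp add: poly_altdef dp sum_distrib_left sum_distrib_right power_add mult_ac)
  have "CL_int \<alpha> (\<lambda>x y. x ^ \<beta> * poly (p k) x * poly (q j) y) = (\<Sum>l\<le>k. coeff (p k) l * CL_int \<alpha> (\<lambda>x y. x ^ (\<beta> + l) * poly (q j) y))"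
    unfolding e1 by (rule CL_int_sum) (auto intro: CLI_xpow assms)
  also have "\<dots> = (\<Sum>l\<le>k. coeff (p k) l * bcoef p (\<beta> + l) (int (\<beta> + l) - int j)) * CL_h \<alpha> p q j"
    unfolding key_left[OF assms] sum_distrib_right by (simp add: mult_ac)
  finally show "CL_int \<alpha> (\<lambda>x y. x ^ \<beta> * poly (p k) x * poly (q j) y) / CL_h \<alpha> p q j
       = (\<Sum>l\<le>k. coeff (p k) l * bcoef p (\<beta> + l) (int (\<beta> + l) - int j))" using h by simp
  have e2: "(\<lambda>x y. y ^ \<beta> * poly (p j) x * poly (q k) y) = (\<lambda>x y. \<Sum>l\<le>k. coeff (q k) l * (poly (p j) x * y ^ (\<beta> + l)))"
    by (intro ext) (simp add: poly_altdef[of "q k"] dp sum_distrib_left sum_distrib_right power_add mult_ac)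
  have "CL_int \<alpha> (\<lambda>x y. y ^ \<beta> * poly (p j) x * poly (q k) y) = (\<Sum>l\<le>k. coeff (q k) l * CL_int \<alpha> (\<lambda>x y. poly (p j) x * y ^ (\<beta> + l)))"
    unfolding e2 by (rule CL_int_sum) (auto intro: CLI_ypow assms)
  also have "\<dots> = (\<Sum>l\<le>k. coeff (q k) l * bcoef q (\<beta> + l) (int (\<beta> + l) - int j)) * CL_h \<alpha> p q j"
    unfolding key_right[OF assms] sum_distrib_right by (simp add: mult_ac)
  finally show "CL_int \<alpha> (\<lambda>x y. y ^ \<beta> * poly (p j) x * poly (q k) y) / CL_h \<alpha> p q j
       = (\<Sum>l\<le>k. coeff (q k) l * bcoef q (\<beta> + l) (int (\<beta> + l) - int j))" using h by simp
qed


end
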